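(* Let $(X,d,f)$ be a dynamical system and $\mathcal{A}=\{\mathcal{U}_n\}_{n\in\mathbb{N}}$ a defining sequence of $X$, and let $\theta:X\to\varprojlim(\hookrightarrow,\mathcal{O}(\mathcal{U}_n))$ be given by $\theta(x)=\big((\mathcal{U}_n[f^i(x)])_{i\in\mathbb{N}}\big)_{n\in\mathbb{N}}$. (i) If $\mathcal{A}$ is complete, then $\theta$ is a homeomorphism onto $\varprojlim(\hookrightarrow,\mathcal{O}(\mathcal{U}_n))$. (ii) If $\mathcal{A}$ is complete and tame, then $f$ is uniformly continuous if and only if $\theta$ and $\theta^{-1}$ are uniformly continuous.
   Context: Spaces are nonempty separable metrizable; $d$ admissible, $f$ continuous. A partition is a cover by pairwise disjoint nonempty clopen sets; $\mathcal{U}[x]$ is the element containing $x$. A defining sequence is a sequence of partitions, each refining the previous, whose union is a basis; complete if nested $U_n\in\mathcal{U}_n$ have nonempty intersection; tame if $\sup\{\operatorname{diam}O:O\in\mathcal{U}_n\}\to0$ and each $\mathcal{U}_n$ is $\rho_n$-separated for some $\rho_n>0$. $\mathcal{O}(\mathcal{U})=\{(O_i)\in\mathcal{U}^{\mathbb{N}}:\forall k\ \exists x,\ f^i(x)\in O_i\ (0\le i\le k)\}$ with metric $1/(i+1)$ ($i$ least index of disagreement, $\mathcal{U}$ discrete). $\hookrightarrow:\mathcal{O}(\mathcal{U}_{n+1})\to\mathcal{O}(\mathcal{U}_n)$ sends $(O_i)$ to the unique $(V_i)\in\mathcal{U}_n^{\mathbb{N}}$ with $O_i\subseteq V_i$;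 the inverse limit is $\{(y_n)\in\prod_n\mathcal{O}(\mathcal{U}_n):y_n=\hookrightarrow(y_{n+1})\}$ with metric $d_\Pi((y_n),(z_n))=\max_n d(y_n,z_n)/(n+1)$. *)

theory Defs
  imports "HOL-Analysis.Analysis"
begin

definition clopen_in :: "'a set \<Rightarrow> ('a \<Rightarrow> 'a \<Rightarrow> real) \<Rightarrow> 'a set \<Rightarrow> bool" where
  "clopen_in X d W \<longleftrightarrow> openin (Metric_space.mtopology X d) W \<and> closedin (Metric_space.mtopology X d) W"

definition is_partition :: "'a set \<Rightarrow> ('a \<Rightarrow> 'a \<Rightarrow> real) \<Rightarrow> 'a set set \<Rightarrow> bool" where
  "is_partition X d P \<longleftrightarrow> \<Union>P = X \<and> (\<forall>W\<in>P. W \<noteq> {} \<and> clopen_in X d W) \<and>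
     (\<forall>W\<in>P. \<forall>W'\<in>P. W \<noteq> W' \<longrightarrow> W \<inter> W' = {})"

definition cell :: "'a set set \<Rightarrow> 'a \<Rightarrow> 'a set" where
  "cell P x = (THE W. W \<in> P \<and> x \<in> W)"

definition refines :: "'a set set \<Rightarrow> 'a set set \<Rightarrow> bool" where
  "refines P Q \<longleftrightarrow> (\<forall>W\<in>P. \<exists>V\<in>Q. W \<subseteq> V)"

definition is_basis_of :: "'a topology \<Rightarrow> 'a set set \<Rightarrow> bool" where
  "is_basis_of T B \<longleftrightarrow> (\<forall>W\<in>B. openin T W) \<and>
     (\<forall>W. openin T W \<longrightarrow> (\<exists>B'\<subseteq>B. \<Union>B' = W))"

definition defining_sequence :: "'a set \<Rightarrow> ('a \<Rightarrow> 'a \<Rightarrow> real) \<Rightarrow> (nat \<Rightarrow> 'a set set) \<Rightarrow> bool" where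
  "defining_sequence X d U \<longleftrightarrow> (\<forall>n. is_partition X d (U n)) \<and>
     (\<forall>n. refines (U (Suc n)) (U n)) \<and>
     is_basis_of (Metric_space.mtopology X d) (\<Union>n. U n)"

definition complete_defseq :: "(nat \<Rightarrow> 'a set set) \<Rightarrow> bool" where
  "complete_defseq U \<longleftrightarrow> (\<forall>V. (\<forall>n. V n \<in> U n) \<and> (\<forall>n. V (Suc n) \<subseteq> V n) \<longrightarrow> (\<Inter>n. V n) \<noteq> {})"

definition mdiam :: "('a \<Rightarrow> 'a \<Rightarrow> real) \<Rightarrow> 'a set \<Rightarrow> ereal" where
  "mdiam d S = Sup {ereal (d x y) | x y. x \<in> S \<and> y \<in> S}"

definition tame_defseq :: "('a \<Rightarrow> 'a \<Rightarrow> real) \<Rightarrow> (nat \<Rightarrow> 'a set set) \<Rightarrow> bool" where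
  "tame_defseq d U \<longleftrightarrow> ((\<lambda>n. Sup (mdiam d ` U n)) \<longlonglongrightarrow> 0) \<and>
     (\<forall>n. \<exists>\<rho>>0. \<forall>W\<in>U n. \<forall>W'\<in>U n. W \<noteq> W' \<longrightarrow> (\<forall>x\<in>W. \<forall>y\<in>W'. \<rho> \<le> d x y))"

definition orbs :: "'a set \<Rightarrow> ('a \<Rightarrow> 'a) \<Rightarrow> 'a set set \<Rightarrow> (nat \<Rightarrow> 'a set) set" where
  "orbs X f P = {s. (\<forall>i. s i \<in> P) \<and> (\<forall>k. \<exists>x\<in>X. \<forall>i\<le>k. (f ^^ i) x \<in> s i)}"

definition orbdist :: "(nat \<Rightarrow> 'a set) \<Rightarrow> (nat \<Rightarrow> 'a set) \<Rightarrow> real" where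
  "orbdist s t = (if s = t then 0 else 1 / (real (LEAST i. s i \<noteq> t i) + 1))"

definition hook :: "'a set set \<Rightarrow> (nat \<Rightarrow> 'a set) \<Rightarrow> (nat \<Rightarrow> 'a set)" where
  "hook Q s = (\<lambda>i. THE V. V \<in> Q \<and> s i \<subseteq> V)"

definition invlim :: "'a set \<Rightarrow> ('a \<Rightarrow> 'a) \<Rightarrow> (nat \<Rightarrow> 'a set set) \<Rightarrow> (nat \<Rightarrow> nat \<Rightarrow> 'a set) set" where
  "invlim X f U = {y. (\<forall>n. y n \<in> orbs X f (U n)) \<and> (\<forall>n. y n = hook (U n) (y (Suc n)))}"

text \<open>d_Pi(y,z) = max_n d(y_n,z_n)/(n+1) (the max exists; written as a Sup).\<close>
definition invlim_dist :: "(nat \<Rightarrow> nat \<Rightarrow> 'a set) \<Rightarrow> (nat \<Rightarrow> nat \<Rightarrow> 'a set) \<Rightarrow> real" where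
  "invlim_dist y z = (SUP n. orbdist (y n) (z n) / (real n + 1))"

definition theta :: "('a \<Rightarrow> 'a) \<Rightarrow> (nat \<Rightarrow> 'a set set) \<Rightarrow> 'a \<Rightarrow> (nat \<Rightarrow> nat \<Rightarrow> 'a set)" where
  "theta f U x = (\<lambda>n i. cell (U n) ((f ^^ i) x))"

end

theory Submission
  imports Defs
begin


lemma orbdist_same[simp]: "orbdist s s = 0" by (simp add: orbdist_def)

lemma orbdist_nonneg: "0 \<le> orbdist s t" by (simp add: orbdist_def)

lemma orbdist_le1: "orbdist s t \<le> 1" by (simp add: orbdist_def)

lemma orbdist_commute: "orbdist s t = orbdist t s"
proof -
  have "(LEAST i. s i \<noteq> t i) = (LEAST i. t i \<noteq> s i)" by metis
  then show ?thesis by (auto simp: orbdist_def)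
qed

lemma orbdist_zero: "orbdist s t = 0 \<longleftrightarrow> s = t"
  by (simp add: orbdist_def)

lemma orbdist_ultra: "orbdist s u \<le> max (orbdist s t) (orbdist t u)"
proof (cases "s = u")
  case True then show ?thesis using orbdist_nonneg[of u t] by simp
next
  case False
  define L where "L = (LEAST i. s i \<noteq> u i)"
  have ex: "\<exists>i. s i \<noteq> u i" using False by (auto simp: fun_eq_iff)
  have sL: "s L \<noteq> u L" unfolding L_def by (rule LeastI_ex[OF ex])
  have du: "orbdist s u = 1 / (real L + 1)" using False by (simp add: orbdist_def L_def)
  show ?thesis
  proof (cases "s L \<noteq> t L")
    case True
    then have "s \<noteq> t" by auto
    have "(LEAST i. s i \<noteq> t i) \<le> L" using True by (rule Least_le)
    then have "orbdist s u \<le> orbdist s t" using \<open>s \<noteq> t\<close> du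
      by (simp add: orbdist_def frac_le)
    then show ?thesis by simp
  next
    case False
    then have tu: "t L \<noteq> u L" using sL by auto
    then have "t \<noteq> u" by auto
    have "(LEAST i. t i \<noteq> u i) \<le> L" using tu by (rule Least_le)
    then have "orbdist s u \<le> orbdist t u" using \<open>t \<noteq> u\<close> du
      by (simp add: orbdist_def frac_le)
    then show ?thesis by simp
  qed
qed

lemma orbdist_triangle: "orbdist s u \<le> orbdist s t + orbdist t u"
  using orbdist_ultra[of s u t] orbdist_nonneg[of s t] orbdist_nonneg[of t u] by linarith

lemma orbdist_lt_imp:
  assumes "orbdist s t < 1 / (real k + 1)" "i \<le> k" shows "s i = t i"
proof (rule ccontr)
  assume ne: "s i \<noteq> t i"
  then have "s \<noteq> t" by auto
  have "(LEAST i. s i \<noteq> t i) \<le> i" using ne by (rule Least_le)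
  then have "1 / (real k + 1) \<le> orbdist s t" using \<open>s \<noteq> t\<close> assms(2)
    by (simp add: orbdist_def frac_le)
  then show False using assms(1) by simp
qed

lemma orbdist_agree:
  assumes "\<And>i. i \<le> k \<Longrightarrow> s i = t i" shows "orbdist s t \<le> 1 / (real k + 2)"
proof (cases "s = t")
  case True then show ?thesis by simp
next
  case False
  then obtain j where j: "s j \<noteq> t j" by (auto simp: fun_eq_iff)
  have "Suc k \<le> (LEAST i. s i \<noteq> t i)"
  proof (rule ccontr)
    assume "\<not> ?thesis"
    then have "(LEAST i. s i \<noteq> t i) \<le> k" by simp
    moreover have "s (LEAST i. s i \<noteq> t i) \<noteq> t (LEAST i. s i \<noteq> t i)" using j by (rule LeastI)
    ultimately show False using assms by blast
  qed
  then show ?thesis using False by (simp add: orbdist_def frac_le)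
qed

lemma orbdist_shift: "orbdist (\<lambda>i. s (Suc i)) (\<lambda>i. t (Suc i)) \<le> 2 * orbdist s t"
proof (cases "(\<lambda>i. s (Suc i)) = (\<lambda>i. t (Suc i))")
  case True then show ?thesis by (simp add: orbdist_nonneg)
next
  case False
  define L' where "L' = (LEAST i. s (Suc i) \<noteq> t (Suc i))"
  have ex: "\<exists>i. s (Suc i) \<noteq> t (Suc i)" using False by (auto simp: fun_eq_iff)
  have sL: "s (Suc L') \<noteq> t (Suc L')" unfolding L'_def by (rule LeastI_ex[OF ex])
  then have "s \<noteq> t" by auto
  have le: "(LEAST i. s i \<noteq> t i) \<le> Suc L'" using sL by (rule Least_le)
  have d1: "orbdist (\<lambda>i. s (Suc i)) (\<lambda>i. t (Suc i)) = 1 / (real L' + 1)"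
    using False by (simp add: orbdist_def L'_def)
  have "1 / (real L' + 2) \<le> orbdist s t" using le \<open>s \<noteq> t\<close>
    by (simp add: orbdist_def frac_le)
  moreover have "1 / (real L' + 1) \<le> 2 * (1 / (real L' + 2))"
    by (simp add: field_simps)
  ultimately show ?thesis using d1 by linarith
qed

lemma invlim_bdd: "bdd_above (range (\<lambda>n. orbdist (y n) (z n) / (real n + 1)))"
proof (rule bdd_aboveI[of _ 1])
  fix x assume "x \<in> range (\<lambda>n. orbdist (y n) (z n) / (real n + 1))"
  then obtain n where "x = orbdist (y n) (z n) / (real n + 1)" by auto
  moreover have "orbdist (y n) (z n) / (real n + 1) \<le> orbdist (y n) (z n)"
    using mult_left_mono[of 1 "real n + 1" "orbdist (y n) (z n)"] orbdist_nonneg[of "y n" "z n"]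
    by (simp add: divide_le_eq)
  ultimately show "x \<le> 1" using orbdist_le1[of "y n" "z n"] by linarith
qed

lemma invlim_dist_ge: "orbdist (y n) (z n) / (real n + 1) \<le> invlim_dist y z"
  unfolding invlim_dist_def by (rule cSUP_upper) (simp_all add: invlim_bdd)

lemma invlim_dist_le:
  assumes "\<And>n. orbdist (y n) (z n) / (real n + 1) \<le> c" shows "invlim_dist y z \<le> c"
  unfolding invlim_dist_def by (rule cSUP_least) (use assms in auto)

lemma invlim_dist_nonneg: "0 \<le> invlim_dist y z"
  using invlim_dist_ge[of y 0 z] orbdist_nonneg[of "y 0" "z 0"] by simp

lemma invlim_dist_metric: "Metric_space M invlim_dist"
proof
  fix x y z :: "nat \<Rightarrow> nat \<Rightarrow> 'a set"
  show "0 \<le> invlim_dist x y" by (rule invlim_dist_nonneg)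
  show "invlim_dist x y = invlim_dist y x"
    unfolding invlim_dist_def by (simp add: orbdist_commute)
  show "invlim_dist x y = 0 \<longleftrightarrow> x = y"
  proof
    assume h: "invlim_dist x y = 0"
    show "x = y"
    proof (rule ext)
      fix n
      have "orbdist (x n) (y n) / (real n + 1) \<le> 0" using invlim_dist_ge[of x n y] h by simp
      then have "orbdist (x n) (y n) \<le> 0" by (simp add: divide_le_0_iff)
      then show "x n = y n" using orbdist_nonneg orbdist_zero by (metis order_antisym)
    qed
  next
    assume "x = y" then show "invlim_dist x y = 0"
      using invlim_dist_le[of x y 0] invlim_dist_nonneg[of x y] by simp
  qed
  show "invlim_dist x z \<le> invlim_dist x y + invlim_dist y z"
  proof (rule invlim_dist_le)
    fix n
    have "orbdist (x n) (z n) / (real n + 1) \<le> orbdist (x n) (y n) / (real n + 1) + orbdist (y n) (z n) / (real n + 1)"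
      using orbdist_triangle[of "x n" "z n" "y n"] by (simp add: add_divide_distrib[symmetric] divide_right_mono)
    also have "\<dots> \<le> invlim_dist x y + invlim_dist y z"
      using invlim_dist_ge[of x n y] invlim_dist_ge[of y n z] by linarith
    finally show "orbdist (x n) (z n) / (real n + 1) \<le> invlim_dist x y + invlim_dist y z" .
  qed
qed

lemma invlim_dist_lt_imp:
  assumes "invlim_dist y z < 1 / ((real n + 1) * (real k + 1))" "i \<le> k"
  shows "y n i = z n i"
proof -
  have "orbdist (y n) (z n) / (real n + 1) < 1 / ((real n + 1) * (real k + 1))"
    using invlim_dist_ge[of y n z] assms(1) by linarith
  then have "orbdist (y n) (z n) / (real n + 1) * (real n + 1) < 1 / ((real n + 1) * (real k + 1)) * (real n + 1)"
    by (rule mult_strict_right_mono) simp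
  then have "orbdist (y n) (z n) < 1 / (real k + 1)"
    by simp
  then show ?thesis using orbdist_lt_imp assms(2) by blast
qed

lemma invlim_dist_shift:
  "invlim_dist (\<lambda>n i. y n (Suc i)) (\<lambda>n i. z n (Suc i)) \<le> 2 * invlim_dist y z"
proof (rule invlim_dist_le)
  fix n
  have "orbdist (\<lambda>i. y n (Suc i)) (\<lambda>i. z n (Suc i)) / (real n + 1) \<le> 2 * orbdist (y n) (z n) / (real n + 1)"
    using orbdist_shift[of "y n" "z n"] by (simp add: divide_right_mono)
  also have "\<dots> \<le> 2 * invlim_dist y z" using invlim_dist_ge[of y n z] by simp
  finally show "orbdist (\<lambda>i. y n (Suc i)) (\<lambda>i. z n (Suc i)) / (real n + 1) \<le> 2 * invlim_dist y z" .
qed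



lemma finite_min:
  fixes P :: "nat \<Rightarrow> real \<Rightarrow> bool"
  assumes ex: "\<And>i. i \<le> N \<Longrightarrow> \<exists>r>0. P i r"
    and mono: "\<And>i r r'. P i r \<Longrightarrow> 0 < r' \<Longrightarrow> r' \<le> r \<Longrightarrow> P i r'"
  shows "\<exists>r>0. \<forall>i\<le>N. P i r"
  using ex
proof (induction N)
  case 0
  then obtain r where "r > 0" "P 0 r" by auto
  then show ?case by auto
next
  case (Suc N)
  then obtain r where r: "r > 0" "\<forall>i\<le>N. P i r" by auto
  obtain r' where r': "r' > 0" "P (Suc N) r'" using Suc.prems by auto
  have "\<forall>i\<le>Suc N. P i (min r r')"
  proof (intro allI impI)
    fix i assume "i \<le> Suc N"
    then consider "i \<le> N" | "i = Suc N" by linarith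
    then show "P i (min r r')"
    proof cases
      case 1 then show ?thesis using r r' mono[of i r "min r r'"] by auto
    next
      case 2 then show ?thesis using r r' mono[of i r' "min r r'"] by auto
    qed
  qed
  then show ?case using r r' by (intro exI[of _ "min r r'"]) auto
qed

lemma eps_N: "(\<epsilon>::real) > 0 \<Longrightarrow> \<exists>N. 1 / (real N + 2) < \<epsilon>"
proof -
  assume "\<epsilon> > 0"
  then obtain n where n: "inverse (real (Suc n)) < \<epsilon>" using reals_Archimedean by blast
  have "1 / (real n + 2) \<le> inverse (real (Suc n))" by (simp add: field_simps)
  then show ?thesis using n by (intro exI[of _ n]) linarith
qed

locale dsys = Metric_space X d for X :: "'a set" and d +
  fixes f :: "'a \<Rightarrow> 'a" and U :: "nat \<Rightarrow> 'a set set"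
  assumes fcont: "continuous_map mtopology mtopology f"
    and dseq: "defining_sequence X d U"
begin

lemma part: "is_partition X d (U n)" using dseq by (simp add: defining_sequence_def)

lemma cells_sub: "W \<in> U n \<Longrightarrow> W \<subseteq> X" using part[of n] by (auto simp: is_partition_def)
lemma cell_ne: "W \<in> U n \<Longrightarrow> W \<noteq> {}" using part[of n] by (auto simp: is_partition_def)
lemma cell_open: "W \<in> U n \<Longrightarrow> openin mtopology W" using part[of n] by (auto simp: is_partition_def clopen_in_def)
lemma cell_closed: "W \<in> U n \<Longrightarrow> closedin mtopology W" using part[of n] by (auto simp: is_partition_def clopen_in_def)
lemma cell_disj: "W \<in> U n \<Longrightarrow> W' \<in> U n \<Longrightarrow> x \<in> W \<Longrightarrow> x \<in> W' \<Longrightarrow> W = W'"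
  using part[of n] by (auto simp: is_partition_def)

lemma cell_eq: assumes "W \<in> U n" "x \<in> W" shows "cell (U n) x = W"
  unfolding cell_def by (rule the_equality) (use assms cell_disj in auto)

lemma cell_in: assumes "x \<in> X" shows "cell (U n) x \<in> U n" "x \<in> cell (U n) x"
proof -
  obtain W where "W \<in> U n" "x \<in> W" using part[of n] assms by (auto simp: is_partition_def)
  then show "cell (U n) x \<in> U n" "x \<in> cell (U n) x" using cell_eq by auto
qed

lemma refine_Suc: "W \<in> U (Suc n) \<Longrightarrow> \<exists>V\<in>U n. W \<subseteq> V"
  using dseq by (auto simp: defining_sequence_def refines_def)

lemma cell_mono: assumes "x \<in> X" "n \<le> m" shows "cell (U m) x \<subseteq> cell (U n) x"
  using assms(2)
proof (induction m rule: dec_induct)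
  case base then show ?case by simp
next
  case (step m)
  obtain V where V: "V \<in> U m" "cell (U (Suc m)) x \<subseteq> V" using refine_Suc cell_in[OF assms(1)] by blast
  then have "x \<in> V" using cell_in[OF assms(1)] by auto
  then have "V = cell (U m) x" using cell_eq V by auto
  then show ?case using V step by auto
qed

lemma hook_cell: assumes "W \<in> U (Suc n)"
  shows "(THE V. V \<in> U n \<and> W \<subseteq> V) \<in> U n \<and> W \<subseteq> (THE V. V \<in> U n \<and> W \<subseteq> V)"
proof -
  obtain V where V: "V \<in> U n" "W \<subseteq> V" using refine_Suc assms by blast
  obtain x where x: "x \<in> W" using cell_ne assms by blast
  have "(THE V. V \<in> U n \<and> W \<subseteq> V) = V"
    by (rule the_equality) (use V x cell_disj in blast)+
  then show ?thesis using V by simp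
qed

lemma fpow_cont: "continuous_map mtopology mtopology (f ^^ i)"
proof (induction i)
  case 0 then show ?case by simp
next
  case (Suc i) show ?case unfolding funpow.simps(2) by (rule continuous_map_compose[OF Suc fcont])
qed

lemma fpow_X: "x \<in> X \<Longrightarrow> (f ^^ i) x \<in> X"
  using fpow_cont[of i] by (auto simp: continuous_map_def Pi_iff)

lemma theta_in: assumes "x \<in> X" shows "theta f U x \<in> invlim X f U"
proof -
  have "\<forall>n. theta f U x n \<in> orbs X f (U n)"
  proof
    fix n
    have "\<forall>k. \<exists>x'\<in>X. \<forall>i\<le>k. (f ^^ i) x' \<in> cell (U n) ((f ^^ i) x)"
      using assms cell_in fpow_X by blast
    then show "theta f U x n \<in> orbs X f (U n)"
      using assms cell_in fpow_X by (auto simp: orbs_def theta_def)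
  qed
  moreover have "theta f U x n = hook (U n) (theta f U x (Suc n))" for n
  proof (rule ext)
    fix i
    define y where "y = (f ^^ i) x"
    have y: "y \<in> X" using fpow_X assms y_def by auto
    define V0 where "V0 = (THE V. V \<in> U n \<and> cell (U (Suc n)) y \<subseteq> V)"
    have "V0 \<in> U n" "cell (U (Suc n)) y \<subseteq> V0"
      using hook_cell[OF cell_in(1)[OF y, of "Suc n"]] V0_def by auto
    then have "cell (U n) y = V0" using cell_eq cell_in(2)[OF y] by blast
    then show "theta f U x n i = hook (U n) (theta f U x (Suc n)) i"
      by (simp add: theta_def hook_def V0_def y_def)
  qed
  ultimately show ?thesis unfolding invlim_def by blast
qed

lemma nbhd: assumes "x \<in> X" "openin mtopology G" "x \<in> G" shows "\<exists>n. cell (U n) x \<subseteq> G"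
proof -
  have "is_basis_of mtopology (\<Union>n. U n)" using dseq by (simp add: defining_sequence_def)
  then obtain B where B: "B \<subseteq> (\<Union>n. U n)" "\<Union>B = G" using assms(2) by (auto simp: is_basis_of_def)
  then obtain W where W: "W \<in> B" "x \<in> W" using assms(3) by auto
  then obtain n where "W \<in> U n" using B by auto
  then have "cell (U n) x = W" using cell_eq W by auto
  then show ?thesis using B W by auto
qed

lemma theta_inj: "inj_on (theta f U) X"
proof (rule inj_onI, rule ccontr)
  fix x y assume xy: "x \<in> X" "y \<in> X" "theta f U x = theta f U y" "x \<noteq> y"
  then have pos: "d x y > 0" by simp
  obtain n where n: "cell (U n) x \<subseteq> mball x (d x y)"
    using nbhd[OF xy(1) openin_mball[of x "d x y"]] pos xy(1) by auto
  have "theta f U x n 0 = theta f U y n 0" using xy(3) by simp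
  then have "cell (U n) x = cell (U n) y" by (simp add: theta_def)
  then have "y \<in> mball x (d x y)" using n cell_in(2)[OF xy(2), of n] by auto
  then show False by simp
qed

lemma invlim_orbs: "y \<in> invlim X f U \<Longrightarrow> y n \<in> orbs X f (U n)" unfolding invlim_def by blast

lemma invlim_hook: "y \<in> invlim X f U \<Longrightarrow> y n i = (THE V. V \<in> U n \<and> y (Suc n) i \<subseteq> V)"
proof -
  assume "y \<in> invlim X f U"
  then have h: "y n = hook (U n) (y (Suc n))" unfolding invlim_def by blast
  have "y n i = hook (U n) (y (Suc n)) i" by (subst h) (rule refl)
  then show ?thesis by (simp add: hook_def)
qed

lemma invlim_cell: "y \<in> invlim X f U \<Longrightarrow> y n i \<in> U n"
  using invlim_orbs by (auto simp: orbs_def)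

lemma hook_sub: assumes "y \<in> invlim X f U" shows "y (Suc n) i \<subseteq> y n i"
proof -
  have "y n i = (THE V. V \<in> U n \<and> y (Suc n) i \<subseteq> V)"
    using assms by (rule invlim_hook)
  then show ?thesis using hook_cell[OF invlim_cell[OF assms]] by simp
qed

lemma hook_mono: assumes "y \<in> invlim X f U" "n \<le> m" shows "y m i \<subseteq> y n i"
  using assms(2)
proof (induction m rule: dec_induct)
  case base then show ?case by simp
next
  case (step m) then show ?case using hook_sub[OF assms(1), of m i] by auto
qed

lemma hook_eq: assumes "y \<in> invlim X f U" "z \<in> invlim X f U" "n \<le> m" "y m i = z m i"
  shows "y n i = z n i"
  using assms(3,4)
proof (induction n rule: inc_induct)
  case base then show ?case by simp
next
  case (step n)
  show ?case using step invlim_hook[OF assms(1), of n i] invlim_hook[OF assms(2), of n i] by simp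
qed

lemma theta_surj: assumes cp: "complete_defseq U" and y: "y \<in> invlim X f U"
  shows "\<exists>x\<in>X. theta f U x = y"
proof -
  have "(\<forall>n. y n 0 \<in> U n) \<and> (\<forall>n. y (Suc n) 0 \<subseteq> y n 0) \<longrightarrow> (\<Inter>n. y n 0) \<noteq> {}"
    using cp unfolding complete_defseq_def by (rule allE[of _ "\<lambda>n. y n 0"])
  then have "(\<Inter>n. y n 0) \<noteq> {}"
    using invlim_cell[OF y] hook_sub[OF y] by blast
  then obtain x where x: "\<And>n. x \<in> y n 0" by auto
  have xX: "x \<in> X" using x[of 0] cells_sub invlim_cell[OF y] by blast
  have cx: "cell (U n) x = y n 0" for n using cell_eq invlim_cell[OF y] x by blast
  have fi: "(f ^^ i) x \<in> y m i" for m i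
  proof (rule ccontr)
    assume nin: "(f ^^ i) x \<notin> y m i"
    define G where "G = {z \<in> topspace mtopology. (f ^^ i) z \<in> topspace mtopology - y m i}"
    have "openin mtopology (topspace mtopology - y m i)"
      using cell_closed[OF invlim_cell[OF y]] by (rule openin_diff[OF openin_topspace])
    then have oG: "openin mtopology G" unfolding G_def
      by (rule openin_continuous_map_preimage[OF fpow_cont])
    have "x \<in> G" using xX nin fpow_X by (simp add: G_def)
    then obtain n where n: "cell (U n) x \<subseteq> G" using nbhd[OF xX oG] by auto
    define n' where "n' = max n m"
    obtain x' where x': "x' \<in> X" "\<forall>j\<le>i. (f ^^ j) x' \<in> y n' j"
    proof -
      have "\<forall>k. \<exists>x\<in>X. \<forall>i\<le>k. (f ^^ i) x \<in> y n' i" using invlim_orbs[OF y, of n'] by (simp add: orbs_def)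
      then show ?thesis using that by blast
    qed
    have "x' \<in> y n' 0" using x' by (metis funpow_0 le0)
    then have "x' \<in> cell (U n) x" using cx[of n'] cell_mono[OF xX, of n n'] n'_def by auto
    then have "(f ^^ i) x' \<notin> y m i" using n by (auto simp: G_def)
    moreover have "(f ^^ i) x' \<in> y m i" using x'(2) hook_mono[OF y, of m n' i] n'_def by auto
    ultimately show False by simp
  qed
  have "theta f U x = y"
    by (intro ext) (simp add: theta_def cell_eq[OF invlim_cell[OF y] fi])
  then show ?thesis using xX by auto
qed

lemma invlim_close: assumes "y \<in> invlim X f U" "z \<in> invlim X f U" "\<And>i. i \<le> N \<Longrightarrow> y N i = z N i"
  shows "invlim_dist y z \<le> 1 / (real N + 2)"
proof (rule invlim_dist_le)
  fix n
  have a0: "0 \<le> orbdist (y n) (z n)" by (rule orbdist_nonneg)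
  have le: "orbdist (y n) (z n) / (real n + 1) \<le> orbdist (y n) (z n)"
    using mult_left_mono[of 1 "real n + 1" "orbdist (y n) (z n)"] a0 by (simp add: divide_le_eq)
  show "orbdist (y n) (z n) / (real n + 1) \<le> 1 / (real N + 2)"
  proof (cases "n \<le> N")
    case True
    then have "\<And>i. i \<le> N \<Longrightarrow> y n i = z n i" using hook_eq[OF assms(1,2) True] assms(3) by blast
    then have "orbdist (y n) (z n) \<le> 1 / (real N + 2)" by (rule orbdist_agree)
    then show ?thesis using le by linarith
  next
    case False
    have "orbdist (y n) (z n) / (real n + 1) \<le> 1 / (real n + 1)"
      using orbdist_le1[of "y n" "z n"] by (simp add: divide_right_mono)
    also have "\<dots> \<le> 1 / (real N + 2)" using False by (simp add: frac_le)
    finally show ?thesis .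
  qed
qed

end


context dsys begin

abbreviation "g \<equiv> inv_into X (theta f U)"

lemma L_metric: "Metric_space (invlim X f U) invlim_dist" by (rule invlim_dist_metric)

lemma theta_g: assumes "complete_defseq U" "y \<in> invlim X f U"
  shows "g y \<in> X" "theta f U (g y) = y"
proof -
  have "y \<in> theta f U ` X" using theta_surj[OF assms] by auto
  then show "g y \<in> X" "theta f U (g y) = y" by (auto intro: inv_into_into f_inv_into_f)
qed

lemma g_theta: "x \<in> X \<Longrightarrow> g (theta f U x) = x"
  using theta_inj by (rule inv_into_f_f)

lemma theta_cont: "continuous_map mtopology (Metric_space.mtopology (invlim X f U) invlim_dist) (theta f U)"
  unfolding metric_continuous_map[OF L_metric]
proof (intro conjI ballI allI impI)
  show "theta f U ` X \<subseteq> invlim X f U" using theta_in by auto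
next
  fix a :: 'a and \<epsilon> :: real assume a: "a \<in> X" and e: "0 < \<epsilon>"
  obtain N where N: "1 / (real N + 2) < \<epsilon>" using eps_N[OF e] by auto
  have "\<exists>r>0. \<forall>i\<le>N. (\<forall>x\<in>X. d a x < r \<longrightarrow> cell (U N) ((f ^^ i) x) = cell (U N) ((f ^^ i) a))"
  proof (rule finite_min)
    fix i assume "i \<le> N"
    define W where "W = cell (U N) ((f ^^ i) a)"
    have fa: "(f ^^ i) a \<in> X" using fpow_X a by auto
    have W: "W \<in> U N" "(f ^^ i) a \<in> W" using cell_in[OF fa] W_def by auto
    define G where "G = {z \<in> topspace mtopology. (f ^^ i) z \<in> W}"
    have oG: "openin mtopology G" unfolding G_def
      by (rule openin_continuous_map_preimage[OF fpow_cont cell_open[OF W(1)]])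
    have "a \<in> G" using a W by (simp add: G_def)
    then obtain r where r: "r > 0" "mball a r \<subseteq> G" using oG by (auto simp: openin_mtopology)
    have "\<forall>x\<in>X. d a x < r \<longrightarrow> cell (U N) ((f ^^ i) x) = W"
    proof (intro ballI impI)
      fix x assume "x \<in> X" "d a x < r"
      then have "x \<in> G" using r a by auto
      then show "cell (U N) ((f ^^ i) x) = W" using cell_eq[OF W(1)] by (simp add: G_def)
    qed
    then show "\<exists>r>0. \<forall>x\<in>X. d a x < r \<longrightarrow> cell (U N) ((f ^^ i) x) = cell (U N) ((f ^^ i) a)"
      using r W_def by auto
  qed auto
  then obtain r where r: "r > 0" "\<And>i x. i \<le> N \<Longrightarrow> x \<in> X \<Longrightarrow> d a x < r \<Longrightarrow> cell (U N) ((f ^^ i) x) = cell (U N) ((f ^^ i) a)"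
    by blast
  show "\<exists>\<delta>>0. \<forall>x. x \<in> X \<and> d a x < \<delta> \<longrightarrow> invlim_dist (theta f U a) (theta f U x) < \<epsilon>"
  proof (intro exI[of _ r] conjI allI impI)
    fix x assume x: "x \<in> X \<and> d a x < r"
    have "invlim_dist (theta f U a) (theta f U x) \<le> 1 / (real N + 2)"
      by (rule invlim_close[OF theta_in[OF a] theta_in]) (use x r in \<open>auto simp: theta_def\<close>)
    then show "invlim_dist (theta f U a) (theta f U x) < \<epsilon>" using N by linarith
  qed (use r in auto)
qed

lemma g_in_cell: assumes "complete_defseq U" "z \<in> invlim X f U" shows "g z \<in> z n 0"
proof -
  have "z n 0 = theta f U (g z) n 0" using theta_g[OF assms] by simp
  also have "\<dots> = cell (U n) (g z)" by (simp add: theta_def)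
  finally show ?thesis using cell_in(2)[OF theta_g(1)[OF assms]] by simp
qed

lemma g_cont: assumes cp: "complete_defseq U"
  shows "continuous_map (Metric_space.mtopology (invlim X f U) invlim_dist) mtopology g"
  unfolding Metric_space.metric_continuous_map[OF L_metric Metric_space_axioms]
proof (intro conjI ballI allI impI)
  show "g ` invlim X f U \<subseteq> X" using theta_g(1)[OF cp] by auto
next
  fix a and \<epsilon> :: real assume a: "a \<in> invlim X f U" and e: "0 < \<epsilon>"
  define x0 where "x0 = g a"
  have x0: "x0 \<in> X" using theta_g(1)[OF cp a] x0_def by simp
  obtain n where n: "cell (U n) x0 \<subseteq> mball x0 \<epsilon>"
    using nbhd[OF x0 openin_mball[of x0 \<epsilon>]] x0 e by auto
  have "a n 0 = theta f U (g a) n 0" using theta_g(2)[OF cp a] by simp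
  then have an: "a n 0 = cell (U n) x0" by (simp add: x0_def theta_def)
  show "\<exists>\<delta>>0. \<forall>x. x \<in> invlim X f U \<and> invlim_dist a x < \<delta> \<longrightarrow> d (g a) (g x) < \<epsilon>"
  proof (intro exI[of _ "1 / ((real n + 1) * (real 0 + 1))"] conjI allI impI)
    fix z assume z: "z \<in> invlim X f U \<and> invlim_dist a z < 1 / ((real n + 1) * (real 0 + 1))"
    then have "a n 0 = z n 0" using invlim_dist_lt_imp[of a z n 0 0] by auto
    then have "g z \<in> cell (U n) x0" using g_in_cell[OF cp, of z n] z an by auto
    then show "d (g a) (g z) < \<epsilon>" using n x0_def by auto
  qed simp
qed

lemma homeo: assumes cp: "complete_defseq U"
  shows "homeomorphic_map mtopology (Metric_space.mtopology (invlim X f U) invlim_dist) (theta f U)"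
  unfolding homeomorphic_map_maps
proof (intro exI[of _ g])
  show "homeomorphic_maps mtopology (Metric_space.mtopology (invlim X f U) invlim_dist) (theta f U) g"
    unfolding homeomorphic_maps_def Metric_space.topspace_mtopology[OF L_metric] topspace_mtopology
    using theta_cont g_cont[OF cp] g_theta theta_g(2)[OF cp] by auto
qed

lemma fpow_uc:
  assumes "\<forall>\<epsilon>>0. \<exists>\<delta>>0. \<forall>x\<in>X. \<forall>y\<in>X. d y x < \<delta> \<longrightarrow> d (f y) (f x) < \<epsilon>"
  shows "\<forall>\<epsilon>>0. \<exists>\<delta>>0. \<forall>x\<in>X. \<forall>y\<in>X. d y x < \<delta> \<longrightarrow> d ((f ^^ i) y) ((f ^^ i) x) < \<epsilon>"
proof (induction i)
  case 0 then show ?case by auto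
next
  case (Suc i)
  show ?case
  proof (intro allI impI)
    fix \<epsilon> :: real assume e: "\<epsilon> > 0"
    obtain \<delta>1 where d1: "\<delta>1 > 0" "\<forall>x\<in>X. \<forall>y\<in>X. d y x < \<delta>1 \<longrightarrow> d (f y) (f x) < \<epsilon>"
      using assms e by blast
    obtain \<delta> where d: "\<delta> > 0" "\<forall>x\<in>X. \<forall>y\<in>X. d y x < \<delta> \<longrightarrow> d ((f ^^ i) y) ((f ^^ i) x) < \<delta>1"
      using Suc d1 by blast
    show "\<exists>\<delta>>0. \<forall>x\<in>X. \<forall>y\<in>X. d y x < \<delta> \<longrightarrow> d ((f ^^ Suc i) y) ((f ^^ Suc i) x) < \<epsilon>"
      using d d1 fpow_X by (intro exI[of _ \<delta>]) auto
  qed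
qed

lemma uc: assumes cp: "complete_defseq U" and tm: "tame_defseq d U"
  shows "uniformly_continuous_map (metric (X, d)) (metric (X, d)) f \<longleftrightarrow>
               uniformly_continuous_map (metric (X, d)) (metric (invlim X f U, invlim_dist)) (theta f U)
             \<and> uniformly_continuous_map (metric (invlim X f U, invlim_dist)) (metric (X, d)) g"
  unfolding uniformly_continuous_map_def mspace_metric mdist_metric
    Metric_space.mspace_metric[OF L_metric] Metric_space.mdist_metric[OF L_metric]
proof (rule iffI, rule conjI)
  have fX: "f \<in> X \<rightarrow> X" using fpow_X[of _ 1] by auto
  have thX: "theta f U \<in> X \<rightarrow> invlim X f U" using theta_in by auto
  have gX: "g \<in> invlim X f U \<rightarrow> X" using theta_g(1)[OF cp] by auto
  obtain \<rho>0 where tlim: "(\<lambda>n. Sup (mdiam d ` U n)) \<longlonglongrightarrow> 0"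
    and sep: "\<And>n. \<rho>0 n > 0 \<and> (\<forall>W\<in>U n. \<forall>W'\<in>U n. W \<noteq> W' \<longrightarrow> (\<forall>x\<in>W. \<forall>y\<in>W'. \<rho>0 n \<le> d x y))"
    using tm unfolding tame_defseq_def by metis
  {
    assume fuc: "f \<in> X \<rightarrow> X \<and> (\<forall>\<epsilon>>0. \<exists>\<delta>>0. \<forall>x\<in>X. \<forall>y\<in>X. d y x < \<delta> \<longrightarrow> d (f y) (f x) < \<epsilon>)"
    show "theta f U \<in> X \<rightarrow> invlim X f U \<and>
      (\<forall>\<epsilon>>0. \<exists>\<delta>>0. \<forall>x\<in>X. \<forall>y\<in>X. d y x < \<delta> \<longrightarrow> invlim_dist (theta f U y) (theta f U x) < \<epsilon>)"
    proof (intro conjI thX allI impI)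
      fix \<epsilon> :: real assume e: "\<epsilon> > 0"
      obtain N where N: "1 / (real N + 2) < \<epsilon>" using eps_N[OF e] by auto
      define \<rho> where "\<rho> = \<rho>0 N"
      have rho: "\<rho> > 0" "\<And>W W' x y. W \<in> U N \<Longrightarrow> W' \<in> U N \<Longrightarrow> W \<noteq> W' \<Longrightarrow> x \<in> W \<Longrightarrow> y \<in> W' \<Longrightarrow> \<rho> \<le> d x y"
        using sep[of N] \<rho>_def by auto
      have "\<exists>r>0. \<forall>i\<le>N. (\<forall>x\<in>X. \<forall>y\<in>X. d y x < r \<longrightarrow> d ((f ^^ i) y) ((f ^^ i) x) < \<rho>)"
      proof (rule finite_min)
        fix i show "\<exists>r>0. \<forall>x\<in>X. \<forall>y\<in>X. d y x < r \<longrightarrow> d ((f ^^ i) y) ((f ^^ i) x) < \<rho>"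
          using fpow_uc[of i] fuc rho(1) by blast
      qed auto
      then obtain r where r: "r > 0" "\<And>i x y. i \<le> N \<Longrightarrow> x \<in> X \<Longrightarrow> y \<in> X \<Longrightarrow> d y x < r \<Longrightarrow> d ((f ^^ i) y) ((f ^^ i) x) < \<rho>"
        by blast
      show "\<exists>\<delta>>0. \<forall>x\<in>X. \<forall>y\<in>X. d y x < \<delta> \<longrightarrow> invlim_dist (theta f U y) (theta f U x) < \<epsilon>"
      proof (intro exI[of _ r] conjI ballI impI)
        fix x y assume x: "x \<in> X" and y: "y \<in> X" and dxy: "d y x < r"
        have "cell (U N) ((f ^^ i) y) = cell (U N) ((f ^^ i) x)" if "i \<le> N" for i
        proof (rule ccontr)
          assume ne: "cell (U N) ((f ^^ i) y) \<noteq> cell (U N) ((f ^^ i) x)"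
          have "\<rho> \<le> d ((f ^^ i) y) ((f ^^ i) x)"
            using rho(2)[OF cell_in(1) cell_in(1) ne cell_in(2) cell_in(2)] fpow_X x y by blast
          then show False using r(2)[OF that x y dxy] by linarith
        qed
        then have "invlim_dist (theta f U y) (theta f U x) \<le> 1 / (real N + 2)"
          by (intro invlim_close[OF theta_in[OF y] theta_in[OF x]]) (simp add: theta_def)
        then show "invlim_dist (theta f U y) (theta f U x) < \<epsilon>" using N by linarith
      qed (use r in auto)
    qed
    show "g \<in> invlim X f U \<rightarrow> X \<and>
      (\<forall>\<epsilon>>0. \<exists>\<delta>>0. \<forall>x\<in>invlim X f U. \<forall>y\<in>invlim X f U. invlim_dist y x < \<delta> \<longrightarrow> d (g y) (g x) < \<epsilon>)"
    proof (intro conjI gX allI impI)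
      fix \<epsilon> :: real assume e: "\<epsilon> > 0"
      have "0 < ereal \<epsilon>" using e by simp
      from order_tendstoD(2)[OF tlim this] obtain n where n: "Sup (mdiam d ` U n) < ereal \<epsilon>"
        by (auto simp: eventually_sequentially)
      show "\<exists>\<delta>>0. \<forall>x\<in>invlim X f U. \<forall>y\<in>invlim X f U. invlim_dist y x < \<delta> \<longrightarrow> d (g y) (g x) < \<epsilon>"
      proof (intro exI[of _ "1 / ((real n + 1) * (real 0 + 1))"] conjI ballI impI)
        fix z z' assume z: "z \<in> invlim X f U" and z': "z' \<in> invlim X f U"
          and dz: "invlim_dist z' z < 1 / ((real n + 1) * (real 0 + 1))"
        have eq: "z' n 0 = z n 0" using invlim_dist_lt_imp[OF dz] by auto
        define W where "W = z n 0"
        have W: "W \<in> U n" "g z \<in> W" "g z' \<in> W"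
          using invlim_cell[OF z] g_in_cell[OF cp z] g_in_cell[OF cp z'] eq W_def by auto
        have "ereal (d (g z') (g z)) \<le> mdiam d W"
          unfolding mdiam_def by (rule Sup_upper) (use W in blast)
        also have "\<dots> \<le> Sup (mdiam d ` U n)" by (rule Sup_upper) (use W in blast)
        finally have "ereal (d (g z') (g z)) < ereal \<epsilon>" using n by (rule order.strict_trans1)
        then show "d (g z') (g z) < \<epsilon>" by simp
      qed simp
    qed
  }
  assume h: "(theta f U \<in> X \<rightarrow> invlim X f U \<and>
      (\<forall>\<epsilon>>0. \<exists>\<delta>>0. \<forall>x\<in>X. \<forall>y\<in>X. d y x < \<delta> \<longrightarrow> invlim_dist (theta f U y) (theta f U x) < \<epsilon>)) \<and>
    (g \<in> invlim X f U \<rightarrow> X \<and>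
      (\<forall>\<epsilon>>0. \<exists>\<delta>>0. \<forall>x\<in>invlim X f U. \<forall>y\<in>invlim X f U. invlim_dist y x < \<delta> \<longrightarrow> d (g y) (g x) < \<epsilon>))"
  show "f \<in> X \<rightarrow> X \<and> (\<forall>\<epsilon>>0. \<exists>\<delta>>0. \<forall>x\<in>X. \<forall>y\<in>X. d y x < \<delta> \<longrightarrow> d (f y) (f x) < \<epsilon>)"
  proof (intro conjI fX allI impI)
    fix \<epsilon> :: real assume e: "\<epsilon> > 0"
    have H1: "\<forall>\<epsilon>>0. \<exists>\<delta>>0. \<forall>x\<in>invlim X f U. \<forall>y\<in>invlim X f U. invlim_dist y x < \<delta> \<longrightarrow> d (g y) (g x) < \<epsilon>"
      using h by blast
    have H2: "\<forall>\<epsilon>>0. \<exists>\<delta>>0. \<forall>x\<in>X. \<forall>y\<in>X. d y x < \<delta> \<longrightarrow> invlim_dist (theta f U y) (theta f U x) < \<epsilon>"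
      using h by blast
    obtain \<delta>1 where d1': "\<delta>1 > 0" "\<forall>x\<in>invlim X f U. \<forall>y\<in>invlim X f U. invlim_dist y x < \<delta>1 \<longrightarrow> d (g y) (g x) < \<epsilon>"
      using H1 e by blast
    have d1: "\<And>x y. x \<in> invlim X f U \<Longrightarrow> y \<in> invlim X f U \<Longrightarrow> invlim_dist y x < \<delta>1 \<Longrightarrow> d (g y) (g x) < \<epsilon>"
      using d1'(2) by blast
    have "\<delta>1 / 2 > 0" using d1'(1) by simp
    then obtain \<delta> where d': "\<delta> > 0" "\<forall>x\<in>X. \<forall>y\<in>X. d y x < \<delta> \<longrightarrow> invlim_dist (theta f U y) (theta f U x) < \<delta>1 / 2"
      using H2 by blast
    have d: "\<And>x y. x \<in> X \<Longrightarrow> y \<in> X \<Longrightarrow> d y x < \<delta> \<Longrightarrow> invlim_dist (theta f U y) (theta f U x) < \<delta>1 / 2"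
      using d'(2) by blast
    have sh: "theta f U (f x) = (\<lambda>n i. theta f U x n (Suc i))" for x
      by (simp add: theta_def funpow_swap1)
    show "\<exists>\<delta>>0. \<forall>x\<in>X. \<forall>y\<in>X. d y x < \<delta> \<longrightarrow> d (f y) (f x) < \<epsilon>"
    proof (intro exI[of _ \<delta>] conjI ballI impI)
      fix x y assume x: "x \<in> X" and y: "y \<in> X" and dxy: "d y x < \<delta>"
      have fxX: "f x \<in> X" "f y \<in> X" using fX x y by auto
      have "invlim_dist (theta f U (f y)) (theta f U (f x)) \<le> 2 * invlim_dist (theta f U y) (theta f U x)"
        unfolding sh by (rule invlim_dist_shift)
      also have "\<dots> < \<delta>1" using d[OF x y dxy] by linarith
      finally have "d (g (theta f U (f y))) (g (theta f U (f x))) < \<epsilon>"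
        using d1[OF theta_in[OF fxX(1)] theta_in[OF fxX(2)]] by blast
      then show "d (f y) (f x) < \<epsilon>" using g_theta fxX by simp
    qed (use d' in auto)
  qed
qed

end

theorem proposition4p12:
  fixes X :: "'a set" and d :: "'a \<Rightarrow> 'a \<Rightarrow> real" and f :: "'a \<Rightarrow> 'a"
    and U :: "nat \<Rightarrow> 'a set set"
  assumes "Metric_space X d"
    and "X \<noteq> {}"
    and "separable_space (Metric_space.mtopology X d)"
    and "continuous_map (Metric_space.mtopology X d) (Metric_space.mtopology X d) f"
    and "defining_sequence X d U"
  shows "(complete_defseq U \<longrightarrow>
            homeomorphic_map (Metric_space.mtopology X d)
              (Metric_space.mtopology (invlim X f U) invlim_dist) (theta f U))
       \<and> (complete_defseq U \<and> tame_defseq d U \<longrightarrow>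
            (uniformly_continuous_map (metric (X, d)) (metric (X, d)) f \<longleftrightarrow>
               uniformly_continuous_map (metric (X, d)) (metric (invlim X f U, invlim_dist)) (theta f U)
             \<and> uniformly_continuous_map (metric (invlim X f U, invlim_dist)) (metric (X, d))
                 (inv_into X (theta f U))))"
proof -
  interpret D: dsys X d f U
    using assms(1,4,5) by (simp add: dsys_def dsys_axioms_def)
  show ?thesis using D.homeo D.uc by blast
qed

end
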